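(* Let $\pi\in\mathcal P(\mathbb R^d)$ and let $\mathsf P$ be a Markov kernel on $\mathbb R^d$ that is reversible with respect to $\pi$. Suppose that there exist increasing functions $F:(0,\tfrac12]\to\mathbb R_+$ and $\Upsilon:\mathbb R_+\to\mathbb R_+$ such that for every measurable partition $\mathbb R^d=S_1\sqcup S_2\sqcup S_3$, $$\pi(S_3)\ \ge\ \Upsilon\big(d(S_1,S_2)\big)\,F\big(\min\{\pi(S_1),\pi(S_2)\}\big),$$ where $d(S_1,S_2)=\inf_{x\in S_1,y\in S_2}\|x-y\|$. Suppose moreover that there exist $\epsilon,\delta>0$ such that for all $x,y\in\mathbb R^d$, $\|x-y\|<\delta$ implies $\mathrm{TV}(\delta_x\mathsf P,\delta_y\mathsf P)<1-\epsilon$. Then $$\mathrm{Gap}(\mathsf P)\ \ge\ \frac{\epsilon^2}{8}\left[\sup_{\theta\in[0,1]}\min\Big\{1-\theta,\ \Upsilon(\delta)\inf_{t\in(0,\frac12]}\frac{F(\theta t)}{2t}\Big\}\right]^2 .$$ If in addition $F$ is concave on $(0,\tfrac12]$, then $$\mathrm{Gap}(\mathsf P)\ \ge\ \frac{\epsilon^2}{8}\left[\min\Big\{\frac12,\ \Upsilon(\delta)\,F(\tfrac14)\Big\}\right]^2 .$$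
   Context: $\mathcal P(\mathbb R^d)$ denotes the probability distributions on $\mathbb R^d$ (with densities, denoted by the same letter). For a Markov kernel $\mathsf P$, $\delta_x\mathsf P$ is the distribution $\mathsf P(x,\cdot)$, and $\mathsf Pu(x)=\int \mathsf P(x,y)u(y)\,dy$. $\mathsf P$ is reversible w.r.t. $\pi$ if $\pi(x)\mathsf P(x,y)=\pi(y)\mathsf P(y,x)$. Total variation: $\mathrm{TV}(\mu,\nu)=\sup_A|\mu(A)-\nu(A)|$. The spectral gap is $$\mathrm{Gap}(\mathsf P)=\inf\Big\{1-\frac{\mathbb E_\pi[u\cdot \mathsf Pu]}{\mathbb E_\pi[u^2]}:\ 0\ne u\in L^2(\pi),\ \mathbb E_\pi[u]=0\Big\}.$$ *)

theory Defs
  imports "HOL-Analysis.Analysis"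
begin

type_synonym 'n pt = "real ^ 'n"

definition prob_density :: "('n::finite pt \<Rightarrow> real) \<Rightarrow> bool" where
  "prob_density p \<longleftrightarrow> p \<in> borel_measurable lborel \<and> (\<forall>x. 0 \<le> p x)
      \<and> (\<integral>\<^sup>+ x. ennreal (p x) \<partial>lborel) = 1"

text \<open>A Markov kernel given by transition densities: P x is the density of delta_x P.\<close>
definition markov_kernel_density :: "('n::finite pt \<Rightarrow> 'n pt \<Rightarrow> real) \<Rightarrow> bool" where
  "markov_kernel_density P \<longleftrightarrow>
      (\<lambda>(x, y). P x y) \<in> borel_measurable (lborel \<Otimes>\<^sub>M lborel)
      \<and> (\<forall>x y. 0 \<le> P x y)
      \<and> (\<forall>x. (\<integral>\<^sup>+ y. ennreal (P x y) \<partial>lborel) = 1)"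

definition reversible :: "('n::finite pt \<Rightarrow> 'n pt \<Rightarrow> real) \<Rightarrow> ('n pt \<Rightarrow> real) \<Rightarrow> bool" where
  "reversible P p \<longleftrightarrow> (\<forall>x y. p x * P x y = p y * P y x)"

definition dmeasure :: "('n::finite pt \<Rightarrow> real) \<Rightarrow> 'n pt measure" where
  "dmeasure p = density lborel (\<lambda>x. ennreal (p x))"

definition TV :: "'n::finite pt measure \<Rightarrow> 'n pt measure \<Rightarrow> real" where
  "TV \<mu> \<nu> = (SUP A \<in> sets borel. \<bar>measure \<mu> A - measure \<nu> A\<bar>)"

definition kernel_apply :: "('n::finite pt \<Rightarrow> 'n pt \<Rightarrow> real) \<Rightarrow> ('n pt \<Rightarrow> real) \<Rightarrow> 'n pt \<Rightarrow> real" where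
  "kernel_apply P u x = (\<integral> y. P x y * u y \<partial>lborel)"

definition L2_0 :: "('n::finite pt \<Rightarrow> real) \<Rightarrow> ('n pt \<Rightarrow> real) set" where
  "L2_0 p = {u. u \<in> borel_measurable borel \<and> integrable (dmeasure p) (\<lambda>x. (u x)\<^sup>2)
              \<and> (\<integral> x. (u x)\<^sup>2 \<partial>dmeasure p) \<noteq> 0
              \<and> (\<integral> x. u x \<partial>dmeasure p) = 0}"

definition Gap :: "('n::finite pt \<Rightarrow> 'n pt \<Rightarrow> real) \<Rightarrow> ('n pt \<Rightarrow> real) \<Rightarrow> real" where
  "Gap P p = (INF u \<in> L2_0 p.
      1 - (\<integral> x. u x * kernel_apply P u x \<partial>dmeasure p) / (\<integral> x. (u x)\<^sup>2 \<partial>dmeasure p))"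

definition set_dist :: "'n::finite pt set \<Rightarrow> 'n pt set \<Rightarrow> real" where
  "set_dist S1 S2 = Inf {norm (x - y) | x y. x \<in> S1 \<and> y \<in> S2}"

end

theory Submission
  imports Defs "HOL-Probability.Probability"
begin
lemma amgm_aux: "0 < (h::real) \<Longrightarrow> \<bar>a\<^sup>2 - b\<^sup>2\<bar> \<le> (a - b)\<^sup>2 / h + h/2 * a\<^sup>2 + h/2 * b\<^sup>2"
proof -
  assume h: "0 < h"
  define x where "x = \<bar>a - b\<bar>"
  define y where "y = \<bar>a + b\<bar>"
  have e: "\<bar>a\<^sup>2 - b\<^sup>2\<bar> = x * y" unfolding x_def y_def by (simp add: power2_eq_square abs_mult[symmetric] algebra_simps)
  have x2: "x\<^sup>2 = (a - b)\<^sup>2" and y2: "y\<^sup>2 = (a + b)\<^sup>2" unfolding x_def y_def by simp_all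
  have "0 \<le> (x - h/2 * y)\<^sup>2" by simp
  then have "h * (x * y) \<le> x\<^sup>2 + h\<^sup>2/4 * y\<^sup>2"
    by (simp add: power2_eq_square algebra_simps)
  then have "h * (x * y) \<le> (a - b)\<^sup>2 + h\<^sup>2/4 * (a + b)\<^sup>2" unfolding x2 y2 .
  moreover have "0 \<le> h\<^sup>2/4 * (a - b)\<^sup>2" by simp
  ultimately have "h * \<bar>a\<^sup>2 - b\<^sup>2\<bar> \<le> (a - b)\<^sup>2 + h\<^sup>2/2 * a\<^sup>2 + h\<^sup>2/2 * b\<^sup>2"
    unfolding e by (simp add: power2_eq_square algebra_simps)
  then show ?thesis using h by (simp add: field_simps power2_eq_square)
qed
lemma split_sq: "(max a 0 - max b 0)\<^sup>2 + (max (-a) 0 - max (-b) 0)\<^sup>2 \<le> ((a::real) - b)\<^sup>2"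
proof (cases "0 \<le> a"; cases "0 \<le> b")
  assume "0 \<le> a" "\<not> 0 \<le> b"
  then have "a * b \<le> 0" by (simp add: mult_nonneg_nonpos)
  then show ?thesis using \<open>0 \<le> a\<close> \<open>\<not> 0 \<le> b\<close> by (simp add: power2_eq_square algebra_simps)
next
  assume "\<not> 0 \<le> a" "0 \<le> b"
  then have "a * b \<le> 0" by (simp add: mult_nonpos_nonneg)
  then show ?thesis using \<open>\<not> 0 \<le> a\<close> \<open>0 \<le> b\<close> by (simp add: power2_eq_square algebra_simps)
qed (simp_all add: power2_eq_square algebra_simps)

lemma split_sq2: "(max a 0)\<^sup>2 + (max (-a) 0)\<^sup>2 = (a::real)\<^sup>2"
  by (cases "0 \<le> a") (auto simp: power2_eq_square)
lemma concave_lin: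
  fixes F :: "real \<Rightarrow> real"
  assumes cc: "concave_on {0<..1/2} F" and nn: "\<forall>t\<in>{0<..1/2}. 0 \<le> F t"
    and s: "0 < s" "s \<le> 1/4"
  shows "4 * s * F (1/4) \<le> F s"
proof -
  have bound: "(s - r) / (1/4 - r) * F (1/4) \<le> F s" if r: "0 < r" "r < s" for r
  proof -
    define l where "l = (s - r) / (1/4 - r)"
    have l0: "0 \<le> l" "l \<le> 1" unfolding l_def using r s by (auto simp: field_simps)
    have d: "1/4 - r \<noteq> 0" using r s by simp
    have ld: "l * (1/4 - r) = s - r" unfolding l_def using d by simp
    have "(1 - l) *\<^sub>R r + l *\<^sub>R (1/4) = r + l * (1/4 - r)" by (simp add: algebra_simps)
    then have eq: "(1 - l) *\<^sub>R r + l *\<^sub>R (1/4) = s" using ld by simp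
    have "(1 - l) * F r + l * F (1/4) \<le> F ((1 - l) *\<^sub>R r + l *\<^sub>R (1/4))"
      by (rule concave_onD[OF cc]) (use l0 r s in auto)
    moreover have "0 \<le> (1 - l) * F r" using l0 nn r s by auto
    ultimately have "l * F (1/4) \<le> F s" unfolding eq by linarith
    then show ?thesis unfolding l_def .
  qed
  have lim: "((\<lambda>r. (s - r) / (1/4 - r) * F (1/4)) \<longlongrightarrow> (s - 0) / (1/4 - 0) * F (1/4)) (at_right 0)"
    by (intro tendsto_intros) auto
  have ev: "eventually (\<lambda>r. (s - r) / (1/4 - r) * F (1/4) \<le> F s) (at_right 0)"
    unfolding eventually_at_right_field using s bound by (intro exI[of _ s]) auto
  have "(s - 0) / (1/4 - 0) * F (1/4) \<le> F s"
    by (rule tendsto_le[OF trivial_limit_at_right_real tendsto_const lim ev])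
  then show ?thesis by simp
qed

locale revk =
  fixes p :: "real ^ 'n::finite \<Rightarrow> real" and P :: "real ^ 'n \<Rightarrow> real ^ 'n \<Rightarrow> real"
  assumes pi: "prob_density p" and kernel: "markov_kernel_density P" and rev: "reversible P p"
begin

lemma p_meas[measurable]: "p \<in> borel_measurable borel"
  using pi unfolding prob_density_def by (simp add: measurable_lborel1)

lemma p_nn[simp]: "0 \<le> p x" using pi unfolding prob_density_def by simp

lemma p_int: "(\<integral>\<^sup>+ x. ennreal (p x) \<partial>lborel) = 1" using pi unfolding prob_density_def by simp

lemma P_meas[measurable]: "(\<lambda>(x, y). P x y) \<in> borel_measurable (borel \<Otimes>\<^sub>M borel)"
proof -
  have "(\<lambda>(x, y). P x y) \<in> borel_measurable (lborel \<Otimes>\<^sub>M lborel)"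
    using kernel unfolding markov_kernel_density_def by simp
  then show ?thesis
    by (simp add: measurable_cong_sets[OF sets_pair_measure_cong[OF sets_lborel sets_lborel] refl])
qed

lemma P_meas'[measurable]: "(\<lambda>x. P (fst x) (snd x)) \<in> borel_measurable (borel \<Otimes>\<^sub>M borel)"
  using P_meas by (simp add: case_prod_beta')

lemma P_nn[simp]: "0 \<le> P x y" using kernel unfolding markov_kernel_density_def by simp

lemma P_int: "(\<integral>\<^sup>+ y. ennreal (P x y) \<partial>lborel) = 1"
  using kernel unfolding markov_kernel_density_def by simp

lemma rev': "p x * P x y = p y * P y x" using rev unfolding reversible_def by simp

definition W :: "(real ^ 'n \<Rightarrow> real ^ 'n \<Rightarrow> ennreal) \<Rightarrow> ennreal" where
  "W g = (\<integral>\<^sup>+ x. \<integral>\<^sup>+ y. ennreal (p x * P x y) * g x y \<partial>lborel \<partial>lborel)"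

lemma W_sym:
  assumes [measurable]: "(\<lambda>(x,y). g x y) \<in> borel_measurable (borel \<Otimes>\<^sub>M borel)"
  shows "W g = W (\<lambda>x y. g y x)"
proof -
  have "W g = (\<integral>\<^sup>+ y. \<integral>\<^sup>+ x. ennreal (p x * P x y) * g x y \<partial>lborel \<partial>lborel)"
    unfolding W_def by (rule lborel_pair.Fubini'[symmetric]) simp
  also have "\<dots> = (\<integral>\<^sup>+ y. \<integral>\<^sup>+ x. ennreal (p y * P y x) * g x y \<partial>lborel \<partial>lborel)"
    by (simp add: rev')
  finally show ?thesis unfolding W_def .
qed

lemma W_fst:
  assumes [measurable]: "g \<in> borel_measurable borel"
  shows "W (\<lambda>x y. g x) = (\<integral>\<^sup>+ x. ennreal (p x) * g x \<partial>lborel)"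
proof -
  have "\<And>x. (\<integral>\<^sup>+ y. ennreal (p x * P x y) * g x \<partial>lborel) = ennreal (p x) * g x"
  proof -
    fix x
    have "(\<integral>\<^sup>+ y. ennreal (p x * P x y) * g x \<partial>lborel) = (\<integral>\<^sup>+ y. (ennreal (p x) * g x) * ennreal (P x y) \<partial>lborel)"
      by (intro nn_integral_cong) (simp add: ennreal_mult mult_ac)
    also have "\<dots> = ennreal (p x) * g x * (\<integral>\<^sup>+ y. ennreal (P x y) \<partial>lborel)"
      by (rule nn_integral_cmult) simp
    finally show "(\<integral>\<^sup>+ y. ennreal (p x * P x y) * g x \<partial>lborel) = ennreal (p x) * g x"
      by (simp add: P_int)
  qed
  then show ?thesis unfolding W_def by simp
qed

lemma W_snd:
  assumes [measurable]: "g \<in> borel_measurable borel"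
  shows "W (\<lambda>x y. g y) = (\<integral>\<^sup>+ x. ennreal (p x) * g x \<partial>lborel)"
  by (subst W_sym) (simp_all add: W_fst)

lemma prob_dm:
  assumes m[measurable]: "q \<in> borel_measurable borel" and nn: "\<And>x. 0 \<le> q x"
    and i: "(\<integral>\<^sup>+ x. ennreal (q x) \<partial>lborel) = 1"
  shows "prob_space (dmeasure q)"
  unfolding dmeasure_def
  by (rule prob_spaceI) (simp add: emeasure_density i)

lemma pi_prob: "prob_space (dmeasure p)"
  by (rule prob_dm) (auto simp: p_int)

lemma K_meas[measurable]: "P x \<in> borel_measurable borel"
  using P_meas by measurable

lemma K_prob: "prob_space (dmeasure (P x))"
  by (rule prob_dm) (auto simp: P_int)

lemma sets_dm[simp]: "sets (dmeasure q) = sets borel" and space_dm[simp]: "space (dmeasure q) = UNIV"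
  by (simp_all add: dmeasure_def)

lemma dm_meas[simp]: "measurable (dmeasure q) M = measurable borel M"
  by (rule measurable_cong_sets) simp_all

lemma emeasure_dm:
  assumes [measurable]: "q \<in> borel_measurable borel" "A \<in> sets borel"
  shows "emeasure (dmeasure q) A = (\<integral>\<^sup>+ x. ennreal (q x) * indicator A x \<partial>lborel)"
  unfolding dmeasure_def by (subst emeasure_density) auto

lemma Kmeasure_meas[measurable]:
  assumes [measurable]: "B \<in> sets borel"
  shows "(\<lambda>x. measure (dmeasure (P x)) B) \<in> borel_measurable borel"
proof -
  have "(\<lambda>x. measure (dmeasure (P x)) B) = (\<lambda>x. enn2real (\<integral>\<^sup>+ y. ennreal (P x y) * indicator B y \<partial>lborel))"
    by (simp add: measure_def emeasure_dm)
  also have "\<dots> \<in> borel_measurable borel"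
    by measurable
  finally show ?thesis .
qed

lemma W_split:
  assumes [measurable]: "g \<in> borel_measurable borel" "h \<in> borel_measurable borel"
  shows "W (\<lambda>x y. g x * h y) = (\<integral>\<^sup>+ x. ennreal (p x) * g x * (\<integral>\<^sup>+ y. ennreal (P x y) * h y \<partial>lborel) \<partial>lborel)"
  unfolding W_def
proof (intro nn_integral_cong)
  fix x
  have "(\<integral>\<^sup>+ y. ennreal (p x * P x y) * (g x * h y) \<partial>lborel) = (\<integral>\<^sup>+ y. (ennreal (p x) * g x) * (ennreal (P x y) * h y) \<partial>lborel)"
    by (intro nn_integral_cong) (simp add: ennreal_mult mult_ac)
  also have "\<dots> = ennreal (p x) * g x * (\<integral>\<^sup>+ y. ennreal (P x y) * h y \<partial>lborel)"
    by (rule nn_integral_cmult) simp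
  finally show "(\<integral>\<^sup>+ y. ennreal (p x * P x y) * (g x * h y) \<partial>lborel) = ennreal (p x) * g x * (\<integral>\<^sup>+ y. ennreal (P x y) * h y \<partial>lborel)" .
qed

lemma W_cut:
  assumes [measurable]: "A \<in> sets borel"
  shows "W (\<lambda>x y. indicator A x * indicator (-A) y) = (\<integral>\<^sup>+ x. ennreal (p x) * indicator A x * ennreal (measure (dmeasure (P x)) (-A)) \<partial>lborel)"
proof -
  have "W (\<lambda>x y. indicator A x * indicator (-A) y) = (\<integral>\<^sup>+ x. ennreal (p x) * indicator A x * (\<integral>\<^sup>+ y. ennreal (P x y) * indicator (-A) y \<partial>lborel) \<partial>lborel)"
    by (rule W_split) auto
  also have "\<dots> = (\<integral>\<^sup>+ x. ennreal (p x) * indicator A x * ennreal (measure (dmeasure (P x)) (-A)) \<partial>lborel)"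
  proof (intro nn_integral_cong)
    fix x
    interpret K: prob_space "dmeasure (P x)" by (rule K_prob)
    have "(\<integral>\<^sup>+ y. ennreal (P x y) * indicator (-A) y \<partial>lborel) = emeasure (dmeasure (P x)) (-A)"
      by (subst emeasure_dm) auto
    also have "\<dots> = ennreal (measure (dmeasure (P x)) (-A))"
      by (rule K.emeasure_eq_measure)
    finally show "ennreal (p x) * indicator A x * (\<integral>\<^sup>+ y. ennreal (P x y) * indicator (-A) y \<partial>lborel) = ennreal (p x) * indicator A x * ennreal (measure (dmeasure (P x)) (-A))"
      by simp
  qed
  finally show ?thesis .
qed

lemma nn_dm:
  assumes [measurable]: "g \<in> borel_measurable borel"
  shows "(\<integral>\<^sup>+ x. g x \<partial>dmeasure p) = (\<integral>\<^sup>+ x. ennreal (p x) * g x \<partial>lborel)"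
  unfolding dmeasure_def by (subst nn_integral_density) auto

lemma W_Tonelli:
  assumes G[measurable]: "(\<lambda>(s, x, y). G s x y) \<in> borel_measurable (borel \<Otimes>\<^sub>M (borel \<Otimes>\<^sub>M borel))"
  shows "W (\<lambda>x y. \<integral>\<^sup>+ s. G s x y \<partial>lborel) = (\<integral>\<^sup>+ s. W (G s) \<partial>lborel)"
proof -
  have G'[measurable]: "(\<lambda>z. G (fst z) (fst (snd z)) (snd (snd z))) \<in> borel_measurable (borel \<Otimes>\<^sub>M (borel \<Otimes>\<^sub>M borel))"
    using G by (simp add: case_prod_beta')
  have [measurable]: "(\<lambda>s. G s x y) \<in> borel_measurable borel" for x y
    using measurable_compose[OF _ G', of "\<lambda>s. (s, x, y)" borel] by simp
  have [measurable]: "(\<lambda>z. G (fst z) x (snd z)) \<in> borel_measurable (borel \<Otimes>\<^sub>M borel)" for x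
    using measurable_compose[OF _ G', of "\<lambda>z. (fst z, x, snd z)" "borel \<Otimes>\<^sub>M borel"] by simp
  have [measurable]: "(\<lambda>z. G (snd (fst z)) (fst (fst z)) (snd z)) \<in> borel_measurable ((borel \<Otimes>\<^sub>M borel) \<Otimes>\<^sub>M borel)"
    using measurable_compose[OF _ G', of "\<lambda>z. (snd (fst z), fst (fst z), snd z)" "(borel \<Otimes>\<^sub>M borel) \<Otimes>\<^sub>M borel"] by simp
  have "W (\<lambda>x y. \<integral>\<^sup>+ s. G s x y \<partial>lborel) = (\<integral>\<^sup>+ x. \<integral>\<^sup>+ y. \<integral>\<^sup>+ s. ennreal (p x * P x y) * G s x y \<partial>lborel \<partial>lborel \<partial>lborel)"
    unfolding W_def by (intro nn_integral_cong nn_integral_cmult[symmetric]) measurable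
  also have "\<dots> = (\<integral>\<^sup>+ x. \<integral>\<^sup>+ s. \<integral>\<^sup>+ y. ennreal (p x * P x y) * G s x y \<partial>lborel \<partial>lborel \<partial>lborel)"
    by (intro nn_integral_cong lborel_pair.Fubini') measurable
  also have "\<dots> = (\<integral>\<^sup>+ s. \<integral>\<^sup>+ x. \<integral>\<^sup>+ y. ennreal (p x * P x y) * G s x y \<partial>lborel \<partial>lborel \<partial>lborel)"
    by (rule lborel_pair.Fubini'[symmetric]) measurable
  finally show ?thesis unfolding W_def .
qed

lemma layer: "(\<integral>\<^sup>+ s. indicator {a..<b} s \<partial>lborel) = ennreal (b - a)" for a b :: real
  by (cases "a \<le> b") (auto simp: ennreal_neg)

lemma abs_layer: "ennreal \<bar>b - a\<bar> = (\<integral>\<^sup>+ s. indicator {a..<b} s + indicator {b..<a} s \<partial>lborel)" for a b :: real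
proof -
  have "ennreal \<bar>b - a\<bar> = ennreal (b - a) + ennreal (a - b)"
    by (cases "a \<le> b") (auto simp: ennreal_neg)
  then show ?thesis by (subst nn_integral_add) (auto simp: layer)
qed

lemma W_add:
  assumes [measurable]: "(\<lambda>(x,y). g1 x y) \<in> borel_measurable (borel \<Otimes>\<^sub>M borel)"
    "(\<lambda>(x,y). g2 x y) \<in> borel_measurable (borel \<Otimes>\<^sub>M borel)"
  shows "W (\<lambda>x y. g1 x y + g2 x y) = W g1 + W g2"
proof -
  have [measurable]: "(\<lambda>z. g1 (fst z) (snd z)) \<in> borel_measurable (borel \<Otimes>\<^sub>M borel)"
    "(\<lambda>z. g2 (fst z) (snd z)) \<in> borel_measurable (borel \<Otimes>\<^sub>M borel)"
    using assms by (simp_all add: case_prod_beta')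
  have [measurable]: "(\<lambda>y. g1 x y) \<in> borel_measurable borel" "(\<lambda>y. g2 x y) \<in> borel_measurable borel" for x
    by measurable
  have "W (\<lambda>x y. g1 x y + g2 x y) = (\<integral>\<^sup>+ x. (\<integral>\<^sup>+ y. ennreal (p x * P x y) * g1 x y \<partial>lborel) + (\<integral>\<^sup>+ y. ennreal (p x * P x y) * g2 x y \<partial>lborel) \<partial>lborel)"
    unfolding W_def by (intro nn_integral_cong) (simp add: distrib_left nn_integral_add)
  also have "\<dots> = W g1 + W g2" unfolding W_def by (rule nn_integral_add) measurable
  finally show ?thesis .
qed

lemma W_cmult:
  assumes [measurable]: "(\<lambda>(x,y). g x y) \<in> borel_measurable (borel \<Otimes>\<^sub>M borel)"
  shows "W (\<lambda>x y. c * g x y) = c * W g"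
proof -
  have [measurable]: "(\<lambda>z. g (fst z) (snd z)) \<in> borel_measurable (borel \<Otimes>\<^sub>M borel)"
    using assms by (simp_all add: case_prod_beta')
  have "W (\<lambda>x y. c * g x y) = (\<integral>\<^sup>+ x. c * (\<integral>\<^sup>+ y. ennreal (p x * P x y) * g x y \<partial>lborel) \<partial>lborel)"
    unfolding W_def by (intro nn_integral_cong) (simp add: mult.left_commute nn_integral_cmult[symmetric])
  also have "\<dots> = c * W g" unfolding W_def by (rule nn_integral_cmult) measurable
  finally show ?thesis .
qed

lemma W_mono:
  assumes "\<And>x y. g1 x y \<le> g2 x y"
  shows "W g1 \<le> W g2"
  unfolding W_def by (intro nn_integral_mono mult_left_mono assms) auto

lemma coarea_lower:
  assumes f[measurable]: "f \<in> borel_measurable borel" and fnn: "\<And>x. 0 \<le> f x"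
    and small: "measure (dmeasure p) {x. 0 < f x} \<le> 1/2"
    and cond: "\<And>A. A \<in> sets borel \<Longrightarrow> measure (dmeasure p) A \<le> 1/2 \<Longrightarrow>
       ennreal (h * measure (dmeasure p) A) \<le> W (\<lambda>x y. indicator A x * indicator (-A) y)"
    and h0: "0 \<le> h"
  shows "ennreal (2*h) * (\<integral>\<^sup>+ x. ennreal ((f x)\<^sup>2) \<partial>dmeasure p) \<le> W (\<lambda>x y. ennreal \<bar>(f x)\<^sup>2 - (f y)\<^sup>2\<bar>)"
proof -
  interpret pm: prob_space "dmeasure p" by (rule pi_prob)
  define G where "G s x y = (if (f y)\<^sup>2 \<le> s \<and> s < (f x)\<^sup>2 then 1 else 0 :: ennreal)" for s x y
  have Gm: "(\<lambda>(s, x, y). G s x y + G s y x) \<in> borel_measurable (borel \<Otimes>\<^sub>M (borel \<Otimes>\<^sub>M borel))"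
    unfolding G_def by measurable
  have Gsm[measurable]: "(\<lambda>(x, y). G s x y) \<in> borel_measurable (borel \<Otimes>\<^sub>M borel)" for s
    unfolding G_def by measurable
  have Gsm2[measurable]: "(\<lambda>(x, y). G s y x) \<in> borel_measurable (borel \<Otimes>\<^sub>M borel)" for s
    unfolding G_def by measurable
  have "W (\<lambda>x y. ennreal \<bar>(f x)\<^sup>2 - (f y)\<^sup>2\<bar>) = W (\<lambda>x y. \<integral>\<^sup>+ s. G s x y + G s y x \<partial>lborel)"
    unfolding abs_layer G_def by (intro arg_cong[where f=W] ext nn_integral_cong) (auto simp: indicator_def)
  also have "\<dots> = (\<integral>\<^sup>+ s. W (\<lambda>x y. G s x y + G s y x) \<partial>lborel)"
    by (rule W_Tonelli[OF Gm])
  also have "\<dots> = (\<integral>\<^sup>+ s. 2 * W (G s) \<partial>lborel)"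
  proof (intro nn_integral_cong)
    fix s
    have "W (\<lambda>x y. G s x y + G s y x) = W (G s) + W (\<lambda>x y. G s y x)"
      by (rule W_add) measurable
    also have "W (\<lambda>x y. G s y x) = W (G s)" by (rule W_sym[symmetric]) measurable
    finally show "W (\<lambda>x y. G s x y + G s y x) = 2 * W (G s)" by (simp add: mult_2)
  qed
  finally have eq1: "W (\<lambda>x y. ennreal \<bar>(f x)\<^sup>2 - (f y)\<^sup>2\<bar>) = (\<integral>\<^sup>+ s. 2 * W (G s) \<partial>lborel)" .
  define A where "A s = {x. s < (f x)\<^sup>2}" for s
  have Am[measurable]: "A s \<in> sets borel" for s unfolding A_def by measurable
  have fpos_m: "{x. 0 < f x} \<in> sets borel" by measurable
  have lowS: "ennreal (h * measure (dmeasure p) (A s)) * indicator {0..} s \<le> W (G s)" for s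
  proof (cases "0 \<le> s")
    case True
    have "A s \<subseteq> {x. 0 < f x}"
    proof
      fix x assume "x \<in> A s"
      then have "0 < (f x)\<^sup>2" using True unfolding A_def by auto
      then show "x \<in> {x. 0 < f x}" using fnn[of x] by (auto simp: less_le)
    qed
    then have "measure (dmeasure p) (A s) \<le> measure (dmeasure p) {x. 0 < f x}"
      by (intro pm.finite_measure_mono) (simp_all add: fpos_m)
    then have "ennreal (h * measure (dmeasure p) (A s)) \<le> W (\<lambda>x y. indicator (A s) x * indicator (- A s) y)"
      using small by (intro cond) auto
    also have "(\<lambda>x y. indicator (A s) x * indicator (- A s) y) = G s"
      unfolding A_def G_def by (auto simp: fun_eq_iff indicator_def)
    finally show ?thesis using True by simp
  qed simp
  have "ennreal (2*h) * (\<integral>\<^sup>+ x. ennreal ((f x)\<^sup>2) \<partial>dmeasure p) = ennreal (2*h) * (\<integral>\<^sup>+ x. ennreal (p x) * (\<integral>\<^sup>+ s. indicator {0..} s * indicator (A s) x \<partial>lborel) \<partial>lborel)"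
  proof -
    have "(\<integral>\<^sup>+ s. indicator {0..} s * indicator (A s) x \<partial>lborel) = ennreal ((f x)\<^sup>2)" for x
    proof -
      have "(\<lambda>s. indicator {0..} s * indicator (A s) x) = (indicator {0..<(f x)\<^sup>2} :: real \<Rightarrow> ennreal)"
        unfolding A_def by (auto simp: fun_eq_iff indicator_def)
      then show ?thesis using layer[of 0 "(f x)\<^sup>2"] by simp
    qed
    then show ?thesis by (simp add: nn_dm)
  qed
  also have "\<dots> = ennreal (2*h) * (\<integral>\<^sup>+ x. \<integral>\<^sup>+ s. ennreal (p x) * (indicator {0..} s * indicator (A s) x) \<partial>lborel \<partial>lborel)"
    by (intro arg_cong2[where f="(*)"] refl nn_integral_cong nn_integral_cmult[symmetric]) (simp add: A_def indicator_def)
  also have "\<dots> = ennreal (2*h) * (\<integral>\<^sup>+ s. \<integral>\<^sup>+ x. ennreal (p x) * (indicator {0..} s * indicator (A s) x) \<partial>lborel \<partial>lborel)"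
    by (subst lborel_pair.Fubini') (simp_all add: A_def indicator_def)
  also have "\<dots> = (\<integral>\<^sup>+ s. ennreal (2*h) * (\<integral>\<^sup>+ x. ennreal (p x) * (indicator {0..} s * indicator (A s) x) \<partial>lborel) \<partial>lborel)"
    by (rule nn_integral_cmult[symmetric]) (simp add: A_def indicator_def)
  also have "\<dots> \<le> (\<integral>\<^sup>+ s. 2 * W (G s) \<partial>lborel)"
  proof (intro nn_integral_mono)
    fix s
    have "(\<integral>\<^sup>+ x. ennreal (p x) * (indicator {0..} s * indicator (A s) x) \<partial>lborel) = (\<integral>\<^sup>+ x. ennreal (p x) * indicator (A s) x \<partial>lborel) * indicator {0..} s"
      by (subst nn_integral_multc[symmetric]) (auto intro!: nn_integral_cong simp: mult_ac)
    also have "\<dots> = ennreal (measure (dmeasure p) (A s)) * indicator {0..} s"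
      by (simp add: emeasure_dm[symmetric] pm.emeasure_eq_measure)
    finally have "ennreal (2*h) * (\<integral>\<^sup>+ x. ennreal (p x) * (indicator {0..} s * indicator (A s) x) \<partial>lborel)
        = 2 * (ennreal (h * measure (dmeasure p) (A s)) * indicator {0..} s)"
      using h0 by (simp add: ennreal_mult mult_ac)
    also have "\<dots> \<le> 2 * W (G s)" by (intro mult_left_mono lowS) auto
    finally show "ennreal (2*h) * (\<integral>\<^sup>+ x. ennreal (p x) * (indicator {0..} s * indicator (A s) x) \<partial>lborel) \<le> 2 * W (G s)" .
  qed
  finally show ?thesis using eq1 by simp
qed

lemma cheeger_f:
  assumes f[measurable]: "f \<in> borel_measurable borel" and fnn: "\<And>x. 0 \<le> f x"
    and small: "measure (dmeasure p) {x. 0 < f x} \<le> 1/2"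
    and cond: "\<And>A. A \<in> sets borel \<Longrightarrow> measure (dmeasure p) A \<le> 1/2 \<Longrightarrow>
       ennreal (h * measure (dmeasure p) A) \<le> W (\<lambda>x y. indicator A x * indicator (-A) y)"
    and h0: "0 \<le> h"
    and fin: "(\<integral>\<^sup>+ x. ennreal ((f x)\<^sup>2) \<partial>dmeasure p) < \<infinity>"
  shows "ennreal (h\<^sup>2) * (\<integral>\<^sup>+ x. ennreal ((f x)\<^sup>2) \<partial>dmeasure p) \<le> W (\<lambda>x y. ennreal ((f x - f y)\<^sup>2))"
proof (cases "h = 0")
  case True then show ?thesis by simp
next
  case False
  then have hpos: "0 < h" using h0 by simp
  define E where "E = (\<integral>\<^sup>+ x. ennreal ((f x)\<^sup>2) \<partial>dmeasure p)"
  define D where "D = W (\<lambda>x y. ennreal ((f x - f y)\<^sup>2))"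
  have low: "ennreal (2*h) * E \<le> W (\<lambda>x y. ennreal \<bar>(f x)\<^sup>2 - (f y)\<^sup>2\<bar>)"
    unfolding E_def by (rule coarea_lower[OF f fnn small cond h0])
  have "W (\<lambda>x y. ennreal \<bar>(f x)\<^sup>2 - (f y)\<^sup>2\<bar>) \<le>
      W (\<lambda>x y. ennreal (1/h) * ennreal ((f x - f y)\<^sup>2) + ennreal (h/2) * ennreal ((f x)\<^sup>2) + ennreal (h/2) * ennreal ((f y)\<^sup>2))"
  proof (rule W_mono)
    fix x y
    have "\<bar>(f x)\<^sup>2 - (f y)\<^sup>2\<bar> \<le> (f x - f y)\<^sup>2 / h + h/2 * (f x)\<^sup>2 + h/2 * (f y)\<^sup>2"
      by (rule amgm_aux[OF hpos])
    then have "ennreal \<bar>(f x)\<^sup>2 - (f y)\<^sup>2\<bar> \<le> ennreal ((f x - f y)\<^sup>2 / h + h/2 * (f x)\<^sup>2 + h/2 * (f y)\<^sup>2)"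
      by (rule ennreal_leI)
    also have "\<dots> = ennreal (1/h) * ennreal ((f x - f y)\<^sup>2) + ennreal (h/2) * ennreal ((f x)\<^sup>2) + ennreal (h/2) * ennreal ((f y)\<^sup>2)"
      using hpos by (simp add: ennreal_plus[symmetric] ennreal_mult[symmetric] del: ennreal_plus)
    finally show "ennreal \<bar>(f x)\<^sup>2 - (f y)\<^sup>2\<bar> \<le> ennreal (1/h) * ennreal ((f x - f y)\<^sup>2) + ennreal (h/2) * ennreal ((f x)\<^sup>2) + ennreal (h/2) * ennreal ((f y)\<^sup>2)" .
  qed
  also have "\<dots> = ennreal (1/h) * D + ennreal (h/2) * E + ennreal (h/2) * E"
    unfolding D_def E_def
    by (simp add: W_add W_cmult W_fst W_snd nn_dm)
  finally have ineq: "ennreal (2*h) * E \<le> ennreal (1/h) * D + ennreal (h/2) * E + ennreal (h/2) * E"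
    using low by simp
  show ?thesis
  proof (cases "D = \<infinity>")
    case True then show ?thesis unfolding D_def by simp
  next
    case False
    obtain d where d: "D = ennreal d" "0 \<le> d" using False by (cases D) auto
    obtain e where e: "E = ennreal e" "0 \<le> e" using fin unfolding E_def[symmetric] by (cases E) auto
    have "ennreal (2*h*e) \<le> ennreal (d/h + h/2*e + h/2*e)"
      using ineq hpos d e by (simp add: ennreal_mult[symmetric] ennreal_plus[symmetric] del: ennreal_plus)
    then have "2*h*e \<le> d/h + h/2*e + h/2*e"
      using hpos d e by (subst (asm) ennreal_le_iff) auto
    then have "h * e \<le> d / h" by (simp add: mult.commute)
    then have "h * (h * e) \<le> d" using hpos by (simp add: field_simps)
    then have "ennreal (h\<^sup>2 * e) \<le> ennreal d" by (intro ennreal_leI) (simp add: power2_eq_square mult_ac)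
    then show ?thesis using d e hpos unfolding D_def E_def by (simp add: ennreal_mult)
  qed
qed

lemma median_exists:
  fixes u :: "real ^ 'n \<Rightarrow> real"
  assumes u[measurable]: "u \<in> borel_measurable borel"
  shows "\<exists>c. measure (dmeasure p) {x. c < u x} \<le> 1/2 \<and> measure (dmeasure p) {x. u x < c} \<le> 1/2"
proof -
  interpret pm: prob_space "dmeasure p" by (rule pi_prob)
  let ?m = "measure (dmeasure p)"
  define L where "L = {t. ?m {x. u x < t} \<le> 1/2}"
  have lt_m[measurable]: "{x. u x < t} \<in> sets borel" for t by measurable
  have gt_m[measurable]: "{x. t < u x} \<in> sets borel" for t by measurable
  have ge_m[measurable]: "{x. t \<le> u x} \<in> sets borel" for t by measurable
  have mono_lt: "s \<le> t \<Longrightarrow> ?m {x. u x < s} \<le> ?m {x. u x < t}" for s t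
    by (intro pm.finite_measure_mono) auto
  have "(\<lambda>n. ?m {x. u x < - real n}) \<longlonglongrightarrow> ?m (\<Inter>n. {x. u x < - real n})"
    by (rule pm.finite_Lim_measure_decseq) (auto simp: decseq_def)
  moreover have "(\<Inter>n. {x. u x < - real n}) = {}"
  proof safe
    fix x assume "x \<in> (\<Inter>n. {x. u x < - real n})"
    moreover obtain n :: nat where "- u x \<le> real n" using real_arch_simple by blast
    ultimately show "x \<in> {}" by (metis INT_E UNIV_I mem_Collect_eq minus_le_iff not_less)
  qed
  ultimately have "(\<lambda>n. ?m {x. u x < - real n}) \<longlonglongrightarrow> 0" by simp
  then have "\<forall>\<^sub>F n in sequentially. ?m {x. u x < - real n} < 1/2"
    by (rule order_tendstoD(2)) simp
  then obtain n where "?m {x. u x < - real n} < 1/2"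
    unfolding eventually_sequentially by blast
  then have "- real n \<in> L" unfolding L_def by simp
  then have Lne: "L \<noteq> {}" by blast
  have "(\<lambda>n. ?m {x. u x < real n}) \<longlonglongrightarrow> ?m (\<Union>n. {x. u x < real n})"
    by (rule pm.finite_Lim_measure_incseq) (auto simp: incseq_def)
  moreover have "(\<Union>n. {x. u x < real n}) = UNIV"
  proof safe
    fix x
    obtain n :: nat where "u x < real n" using reals_Archimedean2 by blast
    then show "x \<in> (\<Union>n. {x. u x < real n})" by auto
  qed auto
  ultimately have "(\<lambda>n. ?m {x. u x < real n}) \<longlonglongrightarrow> 1" using pm.prob_space by simp
  then have "\<forall>\<^sub>F n in sequentially. 1/2 < ?m {x. u x < real n}"
    by (rule order_tendstoD(1)) simp
  then obtain N where N: "1/2 < ?m {x. u x < real N}"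
    unfolding eventually_sequentially by blast
  have Lbdd: "bdd_above L"
  proof (rule bdd_aboveI[where M="real N"])
    fix t assume "t \<in> L"
    then show "t \<le> real N" using N mono_lt[of "real N" t] unfolding L_def by force
  qed
  define c where "c = Sup L"
  have c1: "?m {x. u x < c} \<le> 1/2"
  proof -
    have "(\<lambda>n. ?m {x. u x < c - 1 / Suc n}) \<longlonglongrightarrow> ?m (\<Union>n. {x. u x < c - 1 / Suc n})"
    proof (rule pm.finite_Lim_measure_incseq)
      show "incseq (\<lambda>n. {x. u x < c - 1 / Suc n})"
      proof (rule incseq_SucI, safe)
        fix n x assume "u x < c - 1 / Suc n"
        moreover have "1 / Suc (Suc n) \<le> 1 / Suc n" by (simp add: frac_le)
        ultimately show "u x < c - 1 / Suc (Suc n)" by linarith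
      qed
    qed auto
    moreover have "(\<Union>n. {x. u x < c - 1 / Suc n}) = {x. u x < c}"
    proof safe
      fix x assume "u x < c"
      then obtain n where "1 / Suc n < c - u x"
        using nat_approx_posE[of "c - u x"] by auto
      then have "u x < c - 1 / Suc n" by linarith
      then show "x \<in> (\<Union>n. {x. u x < c - 1 / Suc n})" by blast
    next
      fix x n assume "u x < c - 1 / Suc n"
      moreover have "0 < 1 / Suc n" by simp
      ultimately show "u x < c" by linarith
    qed
    ultimately have lim: "(\<lambda>n. ?m {x. u x < c - 1 / Suc n}) \<longlonglongrightarrow> ?m {x. u x < c}" by simp
    have "?m {x. u x < c - 1 / Suc n} \<le> 1/2" for n
    proof -
      have "c - 1 / Suc n < Sup L" unfolding c_def by simp
      then obtain t where t: "t \<in> L" "c - 1 / Suc n < t" using less_cSup_iff[OF Lne Lbdd] by blast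
      then show ?thesis using mono_lt[of "c - 1 / Suc n" t] unfolding L_def by force
    qed
    then show ?thesis by (intro LIMSEQ_le_const2[OF lim]) auto
  qed
  have c2: "?m {x. c < u x} \<le> 1/2"
  proof -
    have "(\<lambda>n. ?m {x. c + 1 / Suc n \<le> u x}) \<longlonglongrightarrow> ?m (\<Union>n. {x. c + 1 / Suc n \<le> u x})"
    proof (rule pm.finite_Lim_measure_incseq)
      show "incseq (\<lambda>n. {x. c + 1 / Suc n \<le> u x})"
      proof (rule incseq_SucI, safe)
        fix n x assume "c + 1 / Suc n \<le> u x"
        moreover have "1 / Suc (Suc n) \<le> 1 / Suc n" by (simp add: frac_le)
        ultimately show "c + 1 / Suc (Suc n) \<le> u x" by linarith
      qed
    qed auto
    moreover have "(\<Union>n. {x. c + 1 / Suc n \<le> u x}) = {x. c < u x}"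
    proof safe
      fix x assume "c < u x"
      then obtain n where "1 / Suc n < u x - c"
        using nat_approx_posE[of "u x - c"] by auto
      then have "c + 1 / Suc n \<le> u x" by linarith
      then show "x \<in> (\<Union>n. {x. c + 1 / Suc n \<le> u x})" by blast
    next
      fix x n assume "c + 1 / Suc n \<le> u x"
      moreover have "0 < 1 / Suc n" by simp
      ultimately show "c < u x" by linarith
    qed
    ultimately have lim: "(\<lambda>n. ?m {x. c + 1 / Suc n \<le> u x}) \<longlonglongrightarrow> ?m {x. c < u x}" by simp
    have "?m {x. c + 1 / Suc n \<le> u x} \<le> 1/2" for n
    proof -
      have "c + 1 / Suc n \<notin> L"
      proof
        assume "c + 1 / Suc n \<in> L"
        then have "c + 1 / Suc n \<le> c" unfolding c_def by (rule cSup_upper[OF _ Lbdd])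
        moreover have "0 < 1 / Suc n" by simp
        ultimately show False by linarith
      qed
      then have "1/2 < ?m {x. u x < c + 1 / Suc n}" unfolding L_def by simp
      moreover have "{x. c + 1 / Suc n \<le> u x} = UNIV - {x. u x < c + 1 / Suc n}" by auto
      moreover have "?m (UNIV - {x. u x < c + 1 / Suc n}) = 1 - ?m {x. u x < c + 1 / Suc n}"
        using pm.prob_compl[of "{x. u x < c + 1 / Suc n}"] by simp
      ultimately show ?thesis by simp
    qed
    then show ?thesis by (intro LIMSEQ_le_const2[OF lim]) auto
  qed
  show ?thesis using c1 c2 by blast
qed

lemma fin_shift:
  fixes u :: "real ^ 'n \<Rightarrow> real"
  assumes [measurable]: "u \<in> borel_measurable borel"
    and fin: "(\<integral>\<^sup>+ x. ennreal ((u x)\<^sup>2) \<partial>dmeasure p) < \<infinity>"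
  shows "(\<integral>\<^sup>+ x. ennreal ((u x - c)\<^sup>2) \<partial>dmeasure p) < \<infinity>"
proof -
  interpret pm: prob_space "dmeasure p" by (rule pi_prob)
  have "(\<integral>\<^sup>+ x. ennreal ((u x - c)\<^sup>2) \<partial>dmeasure p) \<le> (\<integral>\<^sup>+ x. 2 * ennreal ((u x)\<^sup>2) + ennreal (2 * c\<^sup>2) \<partial>dmeasure p)"
  proof (intro nn_integral_mono)
    fix x
    have "(u x - c)\<^sup>2 \<le> 2 * (u x)\<^sup>2 + 2 * c\<^sup>2"
      using sum_squares_ge_zero[of "u x + c" 0] by (simp add: power2_eq_square algebra_simps)
    then have "ennreal ((u x - c)\<^sup>2) \<le> ennreal (2 * (u x)\<^sup>2 + 2 * c\<^sup>2)" by (rule ennreal_leI)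
    also have "\<dots> = ennreal (2 * (u x)\<^sup>2) + ennreal (2 * c\<^sup>2)"
      by (rule ennreal_plus) auto
    also have "ennreal (2 * (u x)\<^sup>2) = 2 * ennreal ((u x)\<^sup>2)"
      by (simp add: ennreal_mult')
    finally show "ennreal ((u x - c)\<^sup>2) \<le> 2 * ennreal ((u x)\<^sup>2) + ennreal (2 * c\<^sup>2)" .
  qed
  also have "\<dots> = 2 * (\<integral>\<^sup>+ x. ennreal ((u x)\<^sup>2) \<partial>dmeasure p) + ennreal (2 * c\<^sup>2)"
    using pm.emeasure_space_1 by (simp add: nn_integral_add nn_integral_cmult)
  also have "\<dots> < \<infinity>" using fin by (simp add: ennreal_mult_less_top)
  finally show ?thesis .
qed

lemma cheeger_u:
  fixes u :: "real ^ 'n \<Rightarrow> real"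
  assumes u[measurable]: "u \<in> borel_measurable borel"
    and cond: "\<And>A. A \<in> sets borel \<Longrightarrow> measure (dmeasure p) A \<le> 1/2 \<Longrightarrow>
       ennreal (h * measure (dmeasure p) A) \<le> W (\<lambda>x y. indicator A x * indicator (-A) y)"
    and h0: "0 \<le> h"
    and fin: "(\<integral>\<^sup>+ x. ennreal ((u x)\<^sup>2) \<partial>dmeasure p) < \<infinity>"
  shows "\<exists>c. ennreal (h\<^sup>2) * (\<integral>\<^sup>+ x. ennreal ((u x - c)\<^sup>2) \<partial>dmeasure p) \<le> W (\<lambda>x y. ennreal ((u x - u y)\<^sup>2))"
proof -
  obtain c where c1: "measure (dmeasure p) {x. c < u x} \<le> 1/2" and c2: "measure (dmeasure p) {x. u x < c} \<le> 1/2"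
    using median_exists[OF u] by blast
  define f where "f x = max (u x - c) 0" for x
  define g where "g x = max (- (u x - c)) 0" for x
  have fm[measurable]: "f \<in> borel_measurable borel" unfolding f_def by measurable
  have gm[measurable]: "g \<in> borel_measurable borel" unfolding g_def by measurable
  have fnn: "0 \<le> f x" and gnn: "0 \<le> g x" for x unfolding f_def g_def by auto
  have fs: "measure (dmeasure p) {x. 0 < f x} \<le> 1/2"
  proof -
    have "{x. 0 < f x} = {x. c < u x}" unfolding f_def by auto
    then show ?thesis using c1 by simp
  qed
  have gs: "measure (dmeasure p) {x. 0 < g x} \<le> 1/2"
  proof -
    have "{x. 0 < g x} = {x. u x < c}" unfolding g_def by auto
    then show ?thesis using c2 by simp
  qed
  have sq: "(u x - c)\<^sup>2 = (f x)\<^sup>2 + (g x)\<^sup>2" for x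
    unfolding f_def g_def by (rule split_sq2[symmetric])
  have finc: "(\<integral>\<^sup>+ x. ennreal ((u x - c)\<^sup>2) \<partial>dmeasure p) < \<infinity>" by (rule fin_shift[OF u fin])
  have "(\<integral>\<^sup>+ x. ennreal ((f x)\<^sup>2) \<partial>dmeasure p) \<le> (\<integral>\<^sup>+ x. ennreal ((u x - c)\<^sup>2) \<partial>dmeasure p)"
    by (intro nn_integral_mono ennreal_leI) (simp add: sq)
  then have finf: "(\<integral>\<^sup>+ x. ennreal ((f x)\<^sup>2) \<partial>dmeasure p) < \<infinity>" using finc by simp
  have "(\<integral>\<^sup>+ x. ennreal ((g x)\<^sup>2) \<partial>dmeasure p) \<le> (\<integral>\<^sup>+ x. ennreal ((u x - c)\<^sup>2) \<partial>dmeasure p)"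
    by (intro nn_integral_mono ennreal_leI) (simp add: sq)
  then have fing: "(\<integral>\<^sup>+ x. ennreal ((g x)\<^sup>2) \<partial>dmeasure p) < \<infinity>" using finc by simp
  have "ennreal (h\<^sup>2) * (\<integral>\<^sup>+ x. ennreal ((u x - c)\<^sup>2) \<partial>dmeasure p)
      = ennreal (h\<^sup>2) * (\<integral>\<^sup>+ x. ennreal ((f x)\<^sup>2) \<partial>dmeasure p) + ennreal (h\<^sup>2) * (\<integral>\<^sup>+ x. ennreal ((g x)\<^sup>2) \<partial>dmeasure p)"
    by (simp add: sq distrib_left, subst nn_integral_add) (auto simp: distrib_left)
  also have "\<dots> \<le> W (\<lambda>x y. ennreal ((f x - f y)\<^sup>2)) + W (\<lambda>x y. ennreal ((g x - g y)\<^sup>2))"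
    by (intro add_mono cheeger_f[OF fm fnn fs cond h0 finf] cheeger_f[OF gm gnn gs cond h0 fing])
  also have "\<dots> = W (\<lambda>x y. ennreal ((f x - f y)\<^sup>2) + ennreal ((g x - g y)\<^sup>2))"
    by (rule W_add[symmetric]) measurable
  also have "\<dots> \<le> W (\<lambda>x y. ennreal ((u x - u y)\<^sup>2))"
  proof (rule W_mono)
    fix x y
    have "(f x - f y)\<^sup>2 + (g x - g y)\<^sup>2 \<le> ((u x - c) - (u y - c))\<^sup>2"
      unfolding f_def g_def by (rule split_sq)
    then show "ennreal ((f x - f y)\<^sup>2) + ennreal ((g x - g y)\<^sup>2) \<le> ennreal ((u x - u y)\<^sup>2)"
      by (simp add: ennreal_plus[symmetric] del: ennreal_plus)
  qed
  finally show ?thesis by blast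
qed

definition wt :: "(real ^ 'n) \<times> (real ^ 'n) \<Rightarrow> real" where
  "wt z = p (fst z) * P (fst z) (snd z)"

lemma wt_meas[measurable]: "wt \<in> borel_measurable (borel \<Otimes>\<^sub>M borel)"
  unfolding wt_def by measurable

lemma wt_nn[simp]: "0 \<le> wt z" unfolding wt_def by simp

lemma W_pair:
  assumes [measurable]: "(\<lambda>z. g (fst z) (snd z)) \<in> borel_measurable (borel \<Otimes>\<^sub>M borel)"
  shows "W (\<lambda>x y. ennreal (g x y)) = (\<integral>\<^sup>+ z. ennreal (wt z * g (fst z) (snd z)) \<partial>(lborel \<Otimes>\<^sub>M lborel))"
proof -
  have "W (\<lambda>x y. ennreal (g x y)) = (\<integral>\<^sup>+ x. \<integral>\<^sup>+ y. ennreal (wt (x, y) * g x y) \<partial>lborel \<partial>lborel)"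
    unfolding W_def wt_def by (simp add: ennreal_mult')
  also have "\<dots> = (\<integral>\<^sup>+ z. ennreal (wt z * g (fst z) (snd z)) \<partial>(lborel \<Otimes>\<^sub>M lborel))"
    using lborel.nn_integral_fst[where f="\<lambda>z. ennreal (wt z * g (fst z) (snd z))"] by simp
  finally show ?thesis .
qed

lemma dirichlet:
  fixes u :: "real ^ 'n \<Rightarrow> real"
  assumes uL: "u \<in> L2_0 p"
  shows "W (\<lambda>x y. ennreal ((u x - u y)\<^sup>2)) = ennreal (2 * (\<integral> x. (u x)\<^sup>2 \<partial>dmeasure p) - 2 * (\<integral> x. u x * kernel_apply P u x \<partial>dmeasure p))"
    and "0 \<le> 2 * (\<integral> x. (u x)\<^sup>2 \<partial>dmeasure p) - 2 * (\<integral> x. u x * kernel_apply P u x \<partial>dmeasure p)"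
proof -
  interpret pm: prob_space "dmeasure p" by (rule pi_prob)
  have u[measurable]: "u \<in> borel_measurable borel" using uL unfolding L2_0_def by simp
  have u2i: "integrable (dmeasure p) (\<lambda>x. (u x)\<^sup>2)" using uL unfolding L2_0_def by simp
  define N where "N = (\<integral> x. (u x)\<^sup>2 \<partial>dmeasure p)"
  have Nnn: "(\<integral>\<^sup>+ x. ennreal ((u x)\<^sup>2) \<partial>dmeasure p) = ennreal N"
    unfolding N_def using u2i by (subst nn_integral_eq_integral) auto
  let ?L = "lborel \<Otimes>\<^sub>M lborel :: ((real ^ 'n) \<times> (real ^ 'n)) measure"
  define f1 where "f1 z = wt z * (u (fst z))\<^sup>2" for z
  define f2 where "f2 z = wt z * (u (snd z))\<^sup>2" for z
  define f3 where "f3 z = wt z * (u (fst z) * u (snd z))" for z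
  have [measurable]: "f1 \<in> borel_measurable ?L" "f2 \<in> borel_measurable ?L" "f3 \<in> borel_measurable ?L"
    unfolding f1_def f2_def f3_def by measurable
  have nn1: "(\<integral>\<^sup>+ z. ennreal (f1 z) \<partial>?L) = ennreal N"
  proof -
    have "(\<integral>\<^sup>+ z. ennreal (f1 z) \<partial>?L) = W (\<lambda>x y. ennreal ((u x)\<^sup>2))"
      unfolding f1_def by (rule W_pair[symmetric]) measurable
    also have "\<dots> = (\<integral>\<^sup>+ x. ennreal ((u x)\<^sup>2) \<partial>dmeasure p)"
      by (subst W_fst) (simp_all add: nn_dm)
    finally show ?thesis using Nnn by simp
  qed
  have nn2: "(\<integral>\<^sup>+ z. ennreal (f2 z) \<partial>?L) = ennreal N"
  proof -
    have "(\<integral>\<^sup>+ z. ennreal (f2 z) \<partial>?L) = W (\<lambda>x y. ennreal ((u y)\<^sup>2))"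
      unfolding f2_def by (rule W_pair[symmetric]) measurable
    also have "\<dots> = (\<integral>\<^sup>+ x. ennreal ((u x)\<^sup>2) \<partial>dmeasure p)"
      by (subst W_snd) (simp_all add: nn_dm)
    finally show ?thesis using Nnn by simp
  qed
  have i1: "integrable ?L f1"
    using nn1 unfolding f1_def by (intro integrableI_nonneg) auto
  have i2: "integrable ?L f2"
    using nn2 unfolding f2_def by (intro integrableI_nonneg) auto
  have I1: "integral\<^sup>L ?L f1 = N"
    using nn1 i1 by (subst (asm) nn_integral_eq_integral) (auto simp: f1_def N_def)
  have I2: "integral\<^sup>L ?L f2 = N"
    using nn2 i2 by (subst (asm) nn_integral_eq_integral) (auto simp: f2_def N_def)
  have i3: "integrable ?L f3"
  proof (rule Bochner_Integration.integrable_bound[of _ "\<lambda>z. (f1 z + f2 z) / 2"])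
    show "integrable ?L (\<lambda>z. (f1 z + f2 z) / 2)" using i1 i2 by auto
    show "f3 \<in> borel_measurable ?L" by measurable
    show "AE z in ?L. norm (f3 z) \<le> norm ((f1 z + f2 z) / 2)"
    proof (intro AE_I2)
      fix z
      have "2 * \<bar>u (fst z) * u (snd z)\<bar> \<le> (u (fst z))\<^sup>2 + (u (snd z))\<^sup>2"
        using sum_squares_ge_zero[of "\<bar>u (fst z)\<bar> - \<bar>u (snd z)\<bar>" 0]
        by (simp add: power2_eq_square algebra_simps abs_mult)
      then have "wt z * (2 * \<bar>u (fst z) * u (snd z)\<bar>) \<le> wt z * ((u (fst z))\<^sup>2 + (u (snd z))\<^sup>2)"
        by (intro mult_left_mono) auto
      moreover have "0 \<le> f1 z + f2 z" unfolding f1_def f2_def by simp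
      ultimately show "norm (f3 z) \<le> norm ((f1 z + f2 z) / 2)"
        unfolding f1_def f2_def f3_def by (simp add: abs_mult algebra_simps)
    qed
  qed
  have Pu_meas[measurable]: "kernel_apply P u \<in> borel_measurable borel"
  proof -
    have "(\<lambda>x. \<integral> y. P x y * u y \<partial>lborel) \<in> borel_measurable lborel"
      by measurable
    then show ?thesis unfolding kernel_apply_def[abs_def] by simp
  qed
  have I3: "integral\<^sup>L ?L f3 = (\<integral> x. u x * kernel_apply P u x \<partial>dmeasure p)"
  proof -
    have "integral\<^sup>L ?L f3 = (\<integral> x. \<integral> y. f3 (x, y) \<partial>lborel \<partial>lborel)"
      by (rule lborel_pair.integral_fst'[OF i3, symmetric])
    also have "\<dots> = (\<integral> x. p x * (u x * kernel_apply P u x) \<partial>lborel)"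
    proof (intro Bochner_Integration.integral_cong refl)
      fix x
      have "(\<integral> y. f3 (x, y) \<partial>lborel) = (\<integral> y. (p x * u x) * (P x y * u y) \<partial>lborel)"
        unfolding f3_def wt_def by (simp add: mult_ac)
      also have "\<dots> = (p x * u x) * kernel_apply P u x"
        unfolding kernel_apply_def by (rule integral_mult_right_zero)
      finally show "(\<integral> y. f3 (x, y) \<partial>lborel) = p x * (u x * kernel_apply P u x)" by simp
    qed
    also have "\<dots> = (\<integral> x. u x * kernel_apply P u x \<partial>dmeasure p)"
      unfolding dmeasure_def by (subst integral_density) auto
    finally show ?thesis .
  qed
  have "W (\<lambda>x y. ennreal ((u x - u y)\<^sup>2)) = (\<integral>\<^sup>+ z. ennreal (f1 z + f2 z - 2 * f3 z) \<partial>?L)"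
    by (subst W_pair) (auto simp: f1_def f2_def f3_def power2_eq_square algebra_simps intro!: nn_integral_cong)
  also have "\<dots> = ennreal (integral\<^sup>L ?L (\<lambda>z. f1 z + f2 z - 2 * f3 z))"
  proof (rule nn_integral_eq_integral)
    show "integrable ?L (\<lambda>z. f1 z + f2 z - 2 * f3 z)" using i1 i2 i3 by auto
    show "AE z in ?L. 0 \<le> f1 z + f2 z - 2 * f3 z"
    proof (intro AE_I2)
      fix z
      have "0 \<le> wt z * (u (fst z) - u (snd z))\<^sup>2" by simp
      then show "0 \<le> f1 z + f2 z - 2 * f3 z"
        unfolding f1_def f2_def f3_def by (simp add: power2_eq_square algebra_simps)
    qed
  qed
  also have IL: "integral\<^sup>L ?L (\<lambda>z. f1 z + f2 z - 2 * f3 z) = N + N - 2 * (\<integral> x. u x * kernel_apply P u x \<partial>dmeasure p)"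
    using i1 i2 i3 I1 I2 I3 by simp
  finally show "W (\<lambda>x y. ennreal ((u x - u y)\<^sup>2)) = ennreal (2 * (\<integral> x. (u x)\<^sup>2 \<partial>dmeasure p) - 2 * (\<integral> x. u x * kernel_apply P u x \<partial>dmeasure p))"
    unfolding N_def by simp
  have "0 \<le> integral\<^sup>L ?L (\<lambda>z. f1 z + f2 z - 2 * f3 z)"
  proof (rule integral_nonneg_AE, intro AE_I2)
    fix z
    have "0 \<le> wt z * (u (fst z) - u (snd z))\<^sup>2" by simp
    then show "0 \<le> f1 z + f2 z - 2 * f3 z"
      unfolding f1_def f2_def f3_def by (simp add: power2_eq_square algebra_simps)
  qed
  then show "0 \<le> 2 * (\<integral> x. (u x)\<^sup>2 \<partial>dmeasure p) - 2 * (\<integral> x. u x * kernel_apply P u x \<partial>dmeasure p)"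
    unfolding IL N_def by simp
qed

lemma poincare:
  fixes u :: "real ^ 'n \<Rightarrow> real"
  assumes uL: "u \<in> L2_0 p"
    and cond: "\<And>A. A \<in> sets borel \<Longrightarrow> measure (dmeasure p) A \<le> 1/2 \<Longrightarrow>
       ennreal (h * measure (dmeasure p) A) \<le> W (\<lambda>x y. indicator A x * indicator (-A) y)"
    and h0: "0 \<le> h"
  shows "h\<^sup>2 / 2 \<le> 1 - (\<integral> x. u x * kernel_apply P u x \<partial>dmeasure p) / (\<integral> x. (u x)\<^sup>2 \<partial>dmeasure p)"
proof -
  interpret pm: prob_space "dmeasure p" by (rule pi_prob)
  have u[measurable]: "u \<in> borel_measurable borel" using uL unfolding L2_0_def by simp
  have u2i: "integrable (dmeasure p) (\<lambda>x. (u x)\<^sup>2)" using uL unfolding L2_0_def by simp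
  have Nne: "(\<integral> x. (u x)\<^sup>2 \<partial>dmeasure p) \<noteq> 0" and mean0: "(\<integral> x. u x \<partial>dmeasure p) = 0"
    using uL unfolding L2_0_def by auto
  define N where "N = (\<integral> x. (u x)\<^sup>2 \<partial>dmeasure p)"
  define M where "M = (\<integral> x. u x * kernel_apply P u x \<partial>dmeasure p)"
  have N0: "0 \<le> N" unfolding N_def by simp
  then have Npos: "0 < N" using Nne unfolding N_def by linarith
  have ui: "integrable (dmeasure p) u"
    by (rule pm.square_integrable_imp_integrable) (auto simp: u2i)
  have fin: "(\<integral>\<^sup>+ x. ennreal ((u x)\<^sup>2) \<partial>dmeasure p) < \<infinity>"
    using u2i by (subst nn_integral_eq_integral) auto
  obtain c where c: "ennreal (h\<^sup>2) * (\<integral>\<^sup>+ x. ennreal ((u x - c)\<^sup>2) \<partial>dmeasure p) \<le> W (\<lambda>x y. ennreal ((u x - u y)\<^sup>2))"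
    using cheeger_u[OF u cond h0 fin] by blast
  have ci: "integrable (dmeasure p) (\<lambda>x. (u x - c)\<^sup>2)"
  proof -
    have "(\<lambda>x. (u x - c)\<^sup>2) = (\<lambda>x. (u x)\<^sup>2 - 2 * c * u x + c\<^sup>2)" by (simp add: fun_eq_iff power2_diff)
    then show ?thesis using u2i ui by simp
  qed
  have "(\<integral> x. (u x - c)\<^sup>2 \<partial>dmeasure p) = (\<integral> x. (u x)\<^sup>2 - 2 * c * u x + c\<^sup>2 \<partial>dmeasure p)"
    by (intro Bochner_Integration.integral_cong refl) (simp add: power2_diff algebra_simps)
  also have "\<dots> = N - 2 * c * (\<integral> x. u x \<partial>dmeasure p) + c\<^sup>2"
    using u2i ui pm.prob_space unfolding N_def by simp
  finally have Ic: "(\<integral> x. (u x - c)\<^sup>2 \<partial>dmeasure p) = N + c\<^sup>2" using mean0 by simp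
  have "(\<integral>\<^sup>+ x. ennreal ((u x - c)\<^sup>2) \<partial>dmeasure p) = ennreal (N + c\<^sup>2)"
    using ci Ic by (subst nn_integral_eq_integral) auto
  then have "ennreal (h\<^sup>2 * (N + c\<^sup>2)) \<le> ennreal (2 * N - 2 * M)"
    using c dirichlet(1)[OF uL] unfolding N_def M_def by (simp add: ennreal_mult')
  then have "h\<^sup>2 * (N + c\<^sup>2) \<le> 2 * N - 2 * M"
    using dirichlet(2)[OF uL] unfolding N_def M_def by (subst (asm) ennreal_le_iff) auto
  moreover have "h\<^sup>2 * N \<le> h\<^sup>2 * (N + c\<^sup>2)" by (intro mult_left_mono) auto
  ultimately have "h\<^sup>2 * N \<le> 2 * N - 2 * M" by linarith
  then have "h\<^sup>2 / 2 \<le> 1 - M / N" using Npos by (simp add: field_simps)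
  then show ?thesis unfolding M_def N_def .
qed

lemma hyperplane_null: "measure (dmeasure p) {x. x $ k = c} = 0"
proof -
  have Hm[measurable]: "{x::real ^ 'n. x $ k = c} \<in> sets borel" by measurable
  have "negligible {x::real ^ 'n. x \<bullet> axis k 1 = c}"
    by (rule negligible_standard_hyperplane) simp
  then have "negligible {x::real ^ 'n. x $ k = c}" by (simp add: cart_eq_inner_axis)
  then have "{x::real ^ 'n. x $ k = c} \<in> null_sets lborel"
    unfolding negligible_iff_null_sets
    by (subst (asm) null_sets_completion_iff) auto
  then have "emeasure (dmeasure p) {x. x $ k = c} = 0"
    by (simp add: emeasure_dm nn_integral_null_set)
  then show ?thesis by (simp add: measure_def)
qed

lemma L2_0_ne: "L2_0 p \<noteq> {}"
proof -
  interpret pm: prob_space "dmeasure p" by (rule pi_prob)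
  obtain k :: 'n where True by blast
  have v[measurable]: "(\<lambda>x::real ^ 'n. x $ k) \<in> borel_measurable borel" by measurable
  obtain c where c1: "measure (dmeasure p) {x. c < x $ k} \<le> 1/2" and c2: "measure (dmeasure p) {x. x $ k < c} \<le> 1/2"
    using median_exists[OF v] by blast
  define A where "A = {x::real ^ 'n. x $ k < c}"
  have Am[measurable]: "A \<in> sets borel" unfolding A_def by measurable
  have "measure (dmeasure p) (UNIV - A) = measure (dmeasure p) ({x. c < x $ k} \<union> {x. x $ k = c})"
    unfolding A_def by (intro arg_cong[where f="measure (dmeasure p)"]) auto
  also have "\<dots> = measure (dmeasure p) {x. c < x $ k} + measure (dmeasure p) {x. x $ k = c}"
    by (rule pm.finite_measure_Union) auto
  finally have "measure (dmeasure p) (UNIV - A) \<le> 1/2" using c1 hyperplane_null[of k c] by simp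
  moreover have "measure (dmeasure p) (UNIV - A) = 1 - measure (dmeasure p) A"
    using pm.prob_compl[of A] by simp
  ultimately have mA: "measure (dmeasure p) A = 1/2" using c2 unfolding A_def by simp
  define u :: "real ^ 'n \<Rightarrow> real" where "u x = indicator A x - 1/2" for x
  have [measurable]: "u \<in> borel_measurable borel" unfolding u_def by measurable
  have sq: "(u x)\<^sup>2 = 1/4" for x unfolding u_def by (cases "x \<in> A") (auto simp: power2_eq_square)
  have "u \<in> L2_0 p"
    unfolding L2_0_def
  proof (intro CollectI conjI)
    show "u \<in> borel_measurable borel" by measurable
    show "integrable (dmeasure p) (\<lambda>x. (u x)\<^sup>2)" by (simp add: sq)
    show "(\<integral> x. (u x)\<^sup>2 \<partial>dmeasure p) \<noteq> 0" using pm.prob_space by (simp add: sq)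
    have "(\<integral> x. u x \<partial>dmeasure p) = measure (dmeasure p) A - 1/2"
      unfolding u_def using pm.prob_space
      by (subst Bochner_Integration.integral_diff) (auto intro!: pm.integrable_const_bound[where B=1])
    then show "(\<integral> x. u x \<partial>dmeasure p) = 0" using mA by simp
  qed
  then show ?thesis by blast
qed

end

locale thm_ctx = revk p P for p :: "real ^ 'n::finite \<Rightarrow> real" and P +
  fixes F \<Upsilon> :: "real \<Rightarrow> real" and \<epsilon> \<delta> :: real
  assumes F_mono: "mono_on {0<..1/2} F"
    and F_nonneg: "\<forall>t\<in>{0<..1/2}. 0 \<le> F t"
    and U_mono: "mono_on {0..} \<Upsilon>"
    and U_nonneg: "\<forall>r\<ge>0. 0 \<le> \<Upsilon> r"
    and iso: "\<forall>S1 S2 S3. S1 \<in> sets borel \<and> S2 \<in> sets borel \<and> S3 \<in> sets borel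
               \<and> S1 \<inter> S2 = {} \<and> S1 \<inter> S3 = {} \<and> S2 \<inter> S3 = {} \<and> S1 \<union> S2 \<union> S3 = UNIV
               \<and> measure (dmeasure p) S1 > 0 \<and> measure (dmeasure p) S2 > 0
               \<longrightarrow> measure (dmeasure p) S3 \<ge>
                   \<Upsilon> (set_dist S1 S2) *
                   F (min (measure (dmeasure p) S1) (measure (dmeasure p) S2))"
    and eps: "\<epsilon> > 0" and delta: "\<delta> > 0"
    and overlap: "\<forall>x y. norm (x - y) < \<delta> \<longrightarrow>
                    TV (dmeasure (P x)) (dmeasure (P y)) < 1 - \<epsilon>"
begin

definition Ith :: "real \<Rightarrow> real" where
  "Ith \<theta> = (INF t \<in> {0<..1/2}. F (\<theta> * t) / (2 * t))"

definition mth :: "real \<Rightarrow> real" where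
  "mth \<theta> = min (1 - \<theta>) (\<Upsilon> \<delta> * Ith \<theta>)"

lemma theta_t: "\<theta> \<in> {0<..1} \<Longrightarrow> t \<in> {0<..1/2} \<Longrightarrow> \<theta> * (t::real) \<in> {0<..1/2}"
proof -
  assume a: "\<theta> \<in> {0<..1}" "t \<in> {0<..1/2}"
  then have "\<theta> * t \<le> 1 * t" by (intro mult_right_mono) auto
  moreover have "0 < \<theta> * t" using a by simp
  ultimately show ?thesis using a unfolding greaterThanAtMost_iff by linarith
qed

lemma Ith_bdd:
  assumes "\<theta> \<in> {0<..1}"
  shows "bdd_below ((\<lambda>t. F (\<theta> * t) / (2 * t)) ` {0<..1/2})"
proof (rule bdd_belowI2[where m=0])
  fix t :: real assume t: "t \<in> {0<..1/2}"
  have "\<theta> * t \<in> {0<..1/2}" using assms t theta_t by auto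
  then have "0 \<le> F (\<theta> * t)" using F_nonneg by auto
  then show "0 \<le> F (\<theta> * t) / (2 * t)" using t by auto
qed

lemma Ith_nonneg:
  assumes "\<theta> \<in> {0<..1}"
  shows "0 \<le> Ith \<theta>"
  unfolding Ith_def
proof (rule cINF_greatest)
  show "{0<..1/2::real} \<noteq> {}" by auto
  fix t :: real assume t: "t \<in> {0<..1/2}"
  have "\<theta> * t \<in> {0<..1/2}" using assms t theta_t by auto
  then have "0 \<le> F (\<theta> * t)" using F_nonneg by auto
  then show "0 \<le> F (\<theta> * t) / (2 * t)" using t by auto
qed

lemma Ith_le:
  assumes "\<theta> \<in> {0<..1}" "t \<in> {0<..1/2}"
  shows "2 * t * Ith \<theta> \<le> F (\<theta> * t)"
proof -
  have "Ith \<theta> \<le> F (\<theta> * t) / (2 * t)"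
    unfolding Ith_def by (rule cINF_lower[OF Ith_bdd[OF assms(1)] assms(2)])
  then show ?thesis using assms(2) by (simp add: field_simps)
qed

lemma mth_nonneg: "\<theta> \<in> {0<..1} \<Longrightarrow> 0 \<le> mth \<theta>"
  unfolding mth_def using Ith_nonneg U_nonneg delta by auto

lemma TV_ge:
  assumes "B \<in> sets borel"
  shows "\<bar>measure (dmeasure (P x)) B - measure (dmeasure (P y)) B\<bar> \<le> TV (dmeasure (P x)) (dmeasure (P y))"
  unfolding TV_def
proof (rule cSUP_upper[OF assms])
  interpret Kx: prob_space "dmeasure (P x)" by (rule K_prob)
  interpret Ky: prob_space "dmeasure (P y)" by (rule K_prob)
  show "bdd_above ((\<lambda>A. \<bar>measure (dmeasure (P x)) A - measure (dmeasure (P y)) A\<bar>) ` sets borel)"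
  proof (rule bdd_aboveI2[where M=1])
    fix A
    have "measure (dmeasure (P x)) A \<le> 1" "measure (dmeasure (P y)) A \<le> 1"
      using Kx.prob_le_1 Ky.prob_le_1 by auto
    moreover have "0 \<le> measure (dmeasure (P x)) A" "0 \<le> measure (dmeasure (P y)) A" by auto
    ultimately show "\<bar>measure (dmeasure (P x)) A - measure (dmeasure (P y)) A\<bar> \<le> 1" by arith
  qed
qed

lemma conductance:
  assumes th: "\<theta> \<in> {0<..1}" and A[measurable]: "A \<in> sets borel"
    and half: "measure (dmeasure p) A \<le> 1/2"
  shows "ennreal (\<epsilon>/2 * mth \<theta> * measure (dmeasure p) A) \<le> W (\<lambda>x y. indicator A x * indicator (-A) y)"
proof -
  interpret pm: prob_space "dmeasure p" by (rule pi_prob)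
  define k where "k B x = measure (dmeasure (P x)) B" for B x
  have kmeas[measurable]: "k B \<in> borel_measurable borel" if [measurable]: "B \<in> sets borel" for B
    unfolding k_def by measurable
  have ksum: "k (-A) x = 1 - k A x" for x
  proof -
    interpret K: prob_space "dmeasure (P x)" by (rule K_prob)
    have "-A = space (dmeasure (P x)) - A" by auto
    then show ?thesis unfolding k_def using K.prob_compl[of A] by simp
  qed
  define S1 where "S1 = {x \<in> A. k (-A) x < \<epsilon>/2}"
  define S2 where "S2 = {x \<in> -A. k A x < \<epsilon>/2}"
  have S1m[measurable]: "S1 \<in> sets borel" unfolding S1_def by measurable
  have S2m[measurable]: "S2 \<in> sets borel" unfolding S2_def by measurable
  define a where "a = measure (dmeasure p) (A - S1)"
  define b where "b = measure (dmeasure p) (-A - S2)"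
  define t where "t = measure (dmeasure p) A"
  let ?Q = "W (\<lambda>x y. indicator A x * indicator (-A) y)"
  have Qa: "ennreal (\<epsilon>/2 * a) \<le> ?Q"
  proof -
    have "ennreal (\<epsilon>/2 * a) = ennreal (\<epsilon>/2) * emeasure (dmeasure p) (A - S1)"
      unfolding a_def using eps by (simp add: pm.emeasure_eq_measure ennreal_mult[symmetric])
    also have "\<dots> = (\<integral>\<^sup>+ x. ennreal (\<epsilon>/2) * (ennreal (p x) * indicator (A - S1) x) \<partial>lborel)"
      by (subst emeasure_dm) (auto intro!: nn_integral_cmult[symmetric])
    also have "\<dots> \<le> (\<integral>\<^sup>+ x. ennreal (p x) * indicator A x * ennreal (k (-A) x) \<partial>lborel)"
    proof (intro nn_integral_mono)
      fix x
      show "ennreal (\<epsilon>/2) * (ennreal (p x) * indicator (A - S1) x) \<le> ennreal (p x) * indicator A x * ennreal (k (-A) x)"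
      proof (cases "x \<in> A - S1")
        case True
        then have "\<epsilon>/2 \<le> k (-A) x" unfolding S1_def by auto
        then have "ennreal (\<epsilon>/2) \<le> ennreal (k (-A) x)" by (rule ennreal_leI)
        then show ?thesis using True by (simp add: mult_ac mult_left_mono)
      qed auto
    qed
    also have "\<dots> = ?Q" unfolding k_def by (rule W_cut[symmetric]) simp
    finally show ?thesis .
  qed
  have Qb: "ennreal (\<epsilon>/2 * b) \<le> ?Q"
  proof -
    have "ennreal (\<epsilon>/2 * b) = ennreal (\<epsilon>/2) * emeasure (dmeasure p) (-A - S2)"
      unfolding b_def using eps by (simp add: pm.emeasure_eq_measure ennreal_mult[symmetric])
    also have "\<dots> = (\<integral>\<^sup>+ x. ennreal (\<epsilon>/2) * (ennreal (p x) * indicator (-A - S2) x) \<partial>lborel)"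
      by (subst emeasure_dm) (auto intro!: nn_integral_cmult[symmetric])
    also have "\<dots> \<le> (\<integral>\<^sup>+ x. ennreal (p x) * indicator (-A) x * ennreal (k (- (-A)) x) \<partial>lborel)"
    proof (intro nn_integral_mono)
      fix x
      show "ennreal (\<epsilon>/2) * (ennreal (p x) * indicator (-A - S2) x) \<le> ennreal (p x) * indicator (-A) x * ennreal (k (- (-A)) x)"
      proof (cases "x \<in> -A - S2")
        case True
        then have "\<epsilon>/2 \<le> k A x" unfolding S2_def by auto
        then have "ennreal (\<epsilon>/2) \<le> ennreal (k (- (-A)) x)" by (simp add: ennreal_leI)
        then show ?thesis using True by (simp add: mult_ac mult_left_mono)
      qed auto
    qed
    also have "\<dots> = W (\<lambda>x y. indicator (-A) x * indicator (- (-A)) y)" unfolding k_def by (rule W_cut[symmetric]) simp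
    also have "\<dots> = ?Q"
      by (subst W_sym) (simp_all add: mult.commute)
    finally show ?thesis .
  qed
  have a0: "0 \<le> a" and b0: "0 \<le> b" unfolding a_def b_def by auto
  have S1A: "S1 \<subseteq> A" and S2A: "S2 \<subseteq> -A" unfolding S1_def S2_def by auto
  have mS1: "measure (dmeasure p) S1 = t - a"
    unfolding a_def t_def using pm.finite_measure_Diff[of A S1] S1A by simp
  have mcA: "measure (dmeasure p) (-A) = 1 - t"
    unfolding t_def using pm.prob_compl[of A] by (simp add: Compl_eq_Diff_UNIV)
  have mS2: "measure (dmeasure p) S2 = 1 - t - b"
    unfolding b_def using pm.finite_measure_Diff[of "-A" S2] S2A mcA by simp
  define S3 where "S3 = - (S1 \<union> S2)"
  have S3eq: "S3 = (A - S1) \<union> (-A - S2)" unfolding S3_def using S1A S2A by auto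
  have S3m[measurable]: "S3 \<in> sets borel" unfolding S3_def by measurable
  have mS3: "measure (dmeasure p) S3 = a + b"
    unfolding S3eq a_def b_def by (rule pm.finite_measure_Union) auto
  have t0: "0 \<le> t" unfolding t_def by simp
  have th0: "0 < \<theta>" "\<theta> \<le> 1" using th by auto
  have m0: "0 \<le> mth \<theta>" by (rule mth_nonneg[OF th])
  have key: "\<epsilon>/2 * mth \<theta> * t \<le> max (\<epsilon>/2 * a) (\<epsilon>/2 * b)"
  proof (cases "t = 0")
    case True then show ?thesis using a0 eps by (auto simp: le_max_iff_disj)
  next
    case False
    then have tpos: "0 < t" using t0 by simp
    have mle1: "mth \<theta> \<le> 1 - \<theta>" unfolding mth_def by simp
    have mle2: "mth \<theta> \<le> \<Upsilon> \<delta> * Ith \<theta>" unfolding mth_def by simp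
    consider "(1 - \<theta>) * t \<le> a" | "(1 - \<theta>) * t \<le> b" | "a < (1 - \<theta>) * t" "b < (1 - \<theta>) * t" by linarith
    then show ?thesis
    proof cases
      case 1
      have "mth \<theta> * t \<le> (1 - \<theta>) * t" using mle1 t0 by (rule mult_right_mono)
      then have "mth \<theta> * t \<le> a" using 1 by linarith
      then have "\<epsilon>/2 * (mth \<theta> * t) \<le> \<epsilon>/2 * a" using eps by (intro mult_left_mono) auto
      then show ?thesis by (simp add: mult_ac)
    next
      case 2
      have "mth \<theta> * t \<le> (1 - \<theta>) * t" using mle1 t0 by (rule mult_right_mono)
      then have "mth \<theta> * t \<le> b" using 2 by linarith
      then have "\<epsilon>/2 * (mth \<theta> * t) \<le> \<epsilon>/2 * b" using eps by (intro mult_left_mono) auto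
      then show ?thesis by (simp add: mult_ac)
    next
      case 3
      have tle: "t \<le> 1/2" using half unfolding t_def .
      have thtpos: "0 < \<theta> * t" using th0 tpos by simp
      have S1big: "\<theta> * t < measure (dmeasure p) S1" using 3 mS1 by (simp add: algebra_simps)
      have "\<theta> * t \<le> 1 - t - (1 - \<theta>) * t" using tle by (simp add: algebra_simps)
      then have S2big: "\<theta> * t < measure (dmeasure p) S2" using 3 mS2 by linarith
      have S1pos: "0 < measure (dmeasure p) S1" using S1big thtpos by linarith
      have S2pos: "0 < measure (dmeasure p) S2" using S2big thtpos by linarith
      have iso1: "measure (dmeasure p) S3 \<ge> \<Upsilon> (set_dist S1 S2) *
                   F (min (measure (dmeasure p) S1) (measure (dmeasure p) S2))"
        using iso[rule_format, of S1 S2 S3] S1pos S2pos S1A S2A by (auto simp: S3_def)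
      have dist: "\<delta> \<le> set_dist S1 S2"
        unfolding set_dist_def
      proof (rule cInf_greatest)
        have "S1 \<noteq> {}" "S2 \<noteq> {}" using S1pos S2pos by auto
        then show "{norm (x - y) |x y. x \<in> S1 \<and> y \<in> S2} \<noteq> {}" by blast
      next
        fix r assume "r \<in> {norm (x - y) |x y. x \<in> S1 \<and> y \<in> S2}"
        then obtain x y where r: "r = norm (x - y)" and x: "x \<in> S1" and y: "y \<in> S2" by blast
        show "\<delta> \<le> r"
        proof (rule ccontr)
          assume "\<not> \<delta> \<le> r"
          then have "TV (dmeasure (P x)) (dmeasure (P y)) < 1 - \<epsilon>" using overlap r by auto
          moreover have "\<bar>k A x - k A y\<bar> \<le> TV (dmeasure (P x)) (dmeasure (P y))"
            unfolding k_def by (rule TV_ge[OF A])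
          moreover have "k (-A) x < \<epsilon>/2" "k A y < \<epsilon>/2" using x y unfolding S1_def S2_def by auto
          ultimately show False using ksum[of x] by linarith
        qed
      qed
      have U1: "\<Upsilon> \<delta> \<le> \<Upsilon> (set_dist S1 S2)"
        using U_mono dist delta by (intro mono_onD[OF U_mono]) auto
      have U0: "0 \<le> \<Upsilon> \<delta>" using U_nonneg delta by auto
      have tt: "t \<in> {0<..1/2}" using tpos tle by auto
      have thtin: "\<theta> * t \<in> {0<..1/2}" using theta_t[OF th tt] .
      have minle: "min (measure (dmeasure p) S1) (measure (dmeasure p) S2) \<le> 1/2"
        using min.cobounded1[of "measure (dmeasure p) S1" "measure (dmeasure p) S2"] mS1 a0 tle by linarith
      have F1: "F (\<theta> * t) \<le> F (min (measure (dmeasure p) S1) (measure (dmeasure p) S2))"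
        using S1big S2big thtpos minle by (intro mono_onD[OF F_mono]) auto
      have F0: "2 * t * Ith \<theta> \<le> F (\<theta> * t)" by (rule Ith_le[OF th tt])
      have I0: "0 \<le> Ith \<theta>" by (rule Ith_nonneg[OF th])
      have "\<Upsilon> \<delta> * (2 * t * Ith \<theta>) \<le> \<Upsilon> (set_dist S1 S2) * F (min (measure (dmeasure p) S1) (measure (dmeasure p) S2))"
        using U1 U0 F0 F1 I0 tpos by (intro mult_mono) auto
      then have "\<Upsilon> \<delta> * (2 * t * Ith \<theta>) \<le> a + b" using iso1 mS3 by linarith
      moreover have "mth \<theta> * t \<le> \<Upsilon> \<delta> * Ith \<theta> * t" using mle2 t0 by (rule mult_right_mono)
      ultimately have "mth \<theta> * t \<le> max a b" by (simp add: algebra_simps)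
      then have "\<epsilon>/2 * (mth \<theta> * t) \<le> \<epsilon>/2 * max a b" using eps by (intro mult_left_mono) auto
      then show ?thesis using eps by (simp add: mult_ac max_mult_distrib_left)
    qed
  qed
  have "ennreal (\<epsilon>/2 * mth \<theta> * t) \<le> ennreal (max (\<epsilon>/2 * a) (\<epsilon>/2 * b))"
    using key by (rule ennreal_leI)
  also have "\<dots> \<le> ?Q" using Qa Qb by (simp add: max_def)
  finally show ?thesis unfolding t_def .
qed


lemma gap_theta:
  assumes th: "\<theta> \<in> {0<..1}"
  shows "\<epsilon>\<^sup>2 / 8 * (mth \<theta>)\<^sup>2 \<le> Gap P p"
proof -
  define h where "h = \<epsilon>/2 * mth \<theta>"
  have h0: "0 \<le> h" unfolding h_def using mth_nonneg[OF th] eps by simp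
  have cond: "ennreal (h * measure (dmeasure p) A) \<le> W (\<lambda>x y. indicator A x * indicator (-A) y)"
    if "A \<in> sets borel" "measure (dmeasure p) A \<le> 1/2" for A
    unfolding h_def by (rule conductance[OF th that])
  have hh: "h\<^sup>2 / 2 = \<epsilon>\<^sup>2 / 8 * (mth \<theta>)\<^sup>2" unfolding h_def by (simp add: power2_eq_square)
  show ?thesis
    unfolding Gap_def
  proof (rule cINF_greatest[OF L2_0_ne])
    fix u assume "u \<in> L2_0 p"
    from poincare[OF this cond h0]
    show "\<epsilon>\<^sup>2 / 8 * (mth \<theta>)\<^sup>2 \<le> 1 - (\<integral> x. u x * kernel_apply P u x \<partial>dmeasure p) / (\<integral> x. (u x)\<^sup>2 \<partial>dmeasure p)"
      unfolding hh by simp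
  qed
qed

lemma main1: "\<epsilon>\<^sup>2 / 8 * (SUP \<theta> \<in> {0<..1}. mth \<theta>)\<^sup>2 \<le> Gap P p"
proof -
  define G where "G = Gap P p"
  have "min 0 (\<Upsilon> \<delta> * Ith 1) = 0" using Ith_nonneg[of 1] U_nonneg delta by simp
  then have G0: "0 \<le> G" using gap_theta[of 1] unfolding G_def mth_def by simp
  define K where "K = sqrt (8 * G / \<epsilon>\<^sup>2)"
  have K0: "0 \<le> K" unfolding K_def using G0 by simp
  have bdd: "bdd_above (mth ` {0<..1})"
    by (rule bdd_aboveI2[where M=1]) (auto simp: mth_def)
  have S0: "0 \<le> (SUP \<theta> \<in> {0<..1}. mth \<theta>)"
    using cSUP_upper[OF _ bdd, of 1] mth_nonneg[of 1] by simp
  have SK: "(SUP \<theta> \<in> {0<..1}. mth \<theta>) \<le> K"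
  proof (rule cSUP_least)
    show "{0<..1::real} \<noteq> {}" by auto
    fix \<theta> :: real assume th: "\<theta> \<in> {0<..1}"
    have "\<epsilon>\<^sup>2 / 8 * (mth \<theta>)\<^sup>2 \<le> G" using gap_theta[OF th] unfolding G_def .
    then have "(mth \<theta>)\<^sup>2 \<le> 8 * G / \<epsilon>\<^sup>2" using eps by (simp add: field_simps)
    then have "sqrt ((mth \<theta>)\<^sup>2) \<le> K" unfolding K_def by (rule real_sqrt_le_mono)
    then show "mth \<theta> \<le> K" using mth_nonneg[OF th] by simp
  qed
  have "(SUP \<theta> \<in> {0<..1}. mth \<theta>)\<^sup>2 \<le> K\<^sup>2" using SK S0 by (rule power_mono)
  also have "K\<^sup>2 = 8 * G / \<epsilon>\<^sup>2" unfolding K_def using G0 eps by simp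
  finally show ?thesis unfolding G_def using eps by (simp add: field_simps)
qed

lemma main2:
  assumes cc: "concave_on {0<..1/2} F"
  shows "\<epsilon>\<^sup>2 / 8 * (min (1/2) (\<Upsilon> \<delta> * F (1/4)))\<^sup>2 \<le> Gap P p"
proof -
  have th: "(1/2::real) \<in> {0<..1}" by simp
  have FI: "F (1/4) \<le> Ith (1/2)"
    unfolding Ith_def
  proof (rule cINF_greatest)
    show "{0<..1/2::real} \<noteq> {}" by auto
    fix t :: real assume t: "t \<in> {0<..1/2}"
    have "4 * (1/2 * t) * F (1/4) \<le> F (1/2 * t)"
      by (rule concave_lin[OF cc F_nonneg]) (use t in auto)
    then show "F (1/4) \<le> F (1/2 * t) / (2 * t)" using t by (simp add: field_simps)
  qed
  have U0: "0 \<le> \<Upsilon> \<delta>" using U_nonneg delta by auto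
  have F0: "0 \<le> F (1/4)" using F_nonneg by auto
  have "\<Upsilon> \<delta> * F (1/4) \<le> \<Upsilon> \<delta> * Ith (1/2)" using FI U0 by (rule mult_left_mono)
  then have le: "min (1/2) (\<Upsilon> \<delta> * F (1/4)) \<le> mth (1/2)" unfolding mth_def by auto
  have nn: "0 \<le> min (1/2) (\<Upsilon> \<delta> * F (1/4))" using U0 F0 by simp
  have "(min (1/2) (\<Upsilon> \<delta> * F (1/4)))\<^sup>2 \<le> (mth (1/2))\<^sup>2" using le nn by (rule power_mono)
  then have "\<epsilon>\<^sup>2 / 8 * (min (1/2) (\<Upsilon> \<delta> * F (1/4)))\<^sup>2 \<le> \<epsilon>\<^sup>2 / 8 * (mth (1/2))\<^sup>2"
    by (intro mult_left_mono) auto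
  also have "\<dots> \<le> Gap P p" by (rule gap_theta[OF th])
  finally show ?thesis .
qed

end

theorem mainTheorem1:
  fixes p :: "real ^ 'n::finite \<Rightarrow> real"
    and P :: "real ^ 'n \<Rightarrow> real ^ 'n \<Rightarrow> real"
    and F \<Upsilon> :: "real \<Rightarrow> real"
    and \<epsilon> \<delta> :: real
  assumes pi: "prob_density p"
    and kernel: "markov_kernel_density P"
    and rev: "reversible P p"
    and F_mono: "mono_on {0<..1/2} F"
    and F_nonneg: "\<forall>t\<in>{0<..1/2}. 0 \<le> F t"
    and U_mono: "mono_on {0..} \<Upsilon>"
    and U_nonneg: "\<forall>r\<ge>0. 0 \<le> \<Upsilon> r"
    and iso: "\<forall>S1 S2 S3. S1 \<in> sets borel \<and> S2 \<in> sets borel \<and> S3 \<in> sets borel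
               \<and> S1 \<inter> S2 = {} \<and> S1 \<inter> S3 = {} \<and> S2 \<inter> S3 = {} \<and> S1 \<union> S2 \<union> S3 = UNIV
               \<and> measure (dmeasure p) S1 > 0 \<and> measure (dmeasure p) S2 > 0
               \<longrightarrow> measure (dmeasure p) S3 \<ge>
                   \<Upsilon> (set_dist S1 S2) *
                   F (min (measure (dmeasure p) S1) (measure (dmeasure p) S2))"
    and eps: "\<epsilon> > 0" and delta: "\<delta> > 0"
    and overlap: "\<forall>x y. norm (x - y) < \<delta> \<longrightarrow>
                    TV (dmeasure (P x)) (dmeasure (P y)) < 1 - \<epsilon>"
  shows "Gap P p \<ge> \<epsilon>\<^sup>2 / 8 *
           (SUP \<theta> \<in> {0<..1}. min (1 - \<theta>)
               (\<Upsilon> \<delta> * (INF t \<in> {0<..1/2}. F (\<theta> * t) / (2 * t))))\<^sup>2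
       \<and> (concave_on {0<..1/2} F \<longrightarrow>
           Gap P p \<ge> \<epsilon>\<^sup>2 / 8 * (min (1/2) (\<Upsilon> \<delta> * F (1/4)))\<^sup>2)"
proof -
  interpret T: thm_ctx p P F \<Upsilon> \<epsilon> \<delta>
    by (unfold_locales) (fact pi kernel rev F_mono F_nonneg U_mono U_nonneg iso eps delta overlap)+
  show ?thesis
    using T.main1 T.main2 unfolding T.mth_def T.Ith_def by blast
qed

end
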